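(* Let $g:(0,\infty)\times[0,\infty)\to\mathbb{R}$ be non-decreasing in the second variable, and assume that for some $t_0$, $S=\sup_{t>t_0,\,h,k>0}|g(t,h+k)-g(t+h,k)-g(t,h)|<\infty$. Then for any sequence $t_n\to\infty$, $$\limsup_{h\to+\infty}\limsup_{n}\frac{g(t_n,h)}{h}\le\limsup_{h\to+\infty}\limsup_{t\to+\infty}\frac{g(t,h)}{h}.$$ Moreover, for every $\kappa>0$ there is a sequence $\bar t_n\to\infty$ such that $$\limsup_{h\to+\infty}\limsup_{t\to+\infty}\frac{g(t,h)}{h}\le\liminf_{h\to+\infty}\liminf_{n}\frac{g(\bar t_n,h)}{h}+\frac{2S}{\kappa}.$$ *)

theory Defs
  imports "HOL-Analysis.Analysis"
begin

end

theory Submission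
  imports Defs
begin

lemma less_Limsup_at_top:
  fixes X :: "'a::linorder \<Rightarrow> 'b::complete_linorder"
  assumes "y < Limsup at_top X" shows "\<exists>x\<ge>N. y < X x"
proof (rule ccontr)
  assume "\<not> ?thesis"
  then have "eventually (\<lambda>x. X x \<le> y) at_top"
    unfolding eventually_at_top_linorder by (auto intro!: exI[of _ N] simp: not_less)
  then have "Limsup at_top X \<le> y" by (rule Limsup_bounded)
  with assms show False by simp
qed

lemma key:
  fixes g :: "real \<Rightarrow> real \<Rightarrow> real"
  assumes mono: "\<And>t. t > 0 \<Longrightarrow> mono_on {0..} (g t)"
    and Sb: "\<And>t h k. t > t0 \<Longrightarrow> t > 0 \<Longrightarrow> h > 0 \<Longrightarrow> k > 0 \<Longrightarrow> \<bar>g t (h + k) - g (t + h) k - g t h\<bar> \<le> S"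
    and freq: "\<And>H0 M. \<exists>h\<ge>H0. \<exists>p\<ge>M. c1 * h < g p h"
    and cc: "c < c1"
  shows "\<exists>t'\<ge>M. \<forall>h. 0 < h \<and> h \<le> B \<longrightarrow> c * h - (S + 1) \<le> g t' h"
proof -
  define H0 where "H0 = max 1 ((S + \<bar>c\<bar> * B + 2) / (c1 - c))"
  obtain H' where H': "H' \<ge> H0" "\<exists>p\<ge>max M (max (t0+2) 2). c1 * H' < g p H'" using freq by blast
  then obtain p where p: "p \<ge> max M (max (t0+2) 2)" "c1 * H' < g p H'" by blast
  have H'1: "H' \<ge> 1" using H' H0_def by simp
  have "(S + \<bar>c\<bar> * B + 2) / (c1 - c) \<le> H'" using H' H0_def by simp
  then have big: "S + \<bar>c\<bar> * B + 2 \<le> (c1 - c) * H'" using cc by (simp add: field_simps)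
  define t where "t = p - 1"
  have t: "t > t0" "t > 0" "t + 1 = p" using p t_def by auto
  define F where "F s = g t (s - t) - c * (s - t)" for s
  define D where "D = {t+1..t+1+H'}"
  define m where "m = Inf (F ` D)"
  have Dne: "F ` D \<noteq> {}" using H'1 D_def by auto
  have lowb: "F s \<ge> g t 1 - \<bar>c\<bar> * (H' + 1)" if "s \<in> D" for s
  proof -
    have "g t 1 \<le> g t (s - t)" using mono[OF t(2)] that D_def by (auto intro: mono_onD)
    moreover have "c * (s - t) \<le> \<bar>c\<bar> * (H' + 1)"
    proof -
      have "c * (s - t) \<le> \<bar>c\<bar> * \<bar>s - t\<bar>" by (metis abs_ge_self abs_mult)
      also have "\<dots> \<le> \<bar>c\<bar> * (H' + 1)" using that D_def by (intro mult_left_mono) auto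
      finally show ?thesis .
    qed
    ultimately show ?thesis unfolding F_def by linarith
  qed
  have bdd: "bdd_below (F ` D)" using lowb by (auto intro!: bdd_belowI2)
  have mle: "m \<le> F (t+1)" unfolding m_def using bdd D_def H'1 by (intro cInf_lower) auto
  obtain t' where t': "t' \<in> D" "F t' < m + 1"
    using cInf_lessD[OF Dne, of "m+1"] m_def by auto
  have Fh: "F (t' + h) > F t' - 1" if h: "0 < h" "h \<le> B" for h
  proof (cases "t' + h \<le> t + 1 + H'")
    case True
    then have "t' + h \<in> D" using t' h D_def by auto
    then have "m \<le> F (t' + h)" unfolding m_def using bdd by (intro cInf_lower) auto
    then show ?thesis using t' by linarith
  next
    case False
    define a where "a = t' + h - t"
    have a: "a > H' + 1" "a \<le> H' + 1 + B" using False t' h D_def a_def by auto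
    have "g t (1 + H') \<le> g t a" using mono[OF t(2)] a H'1 by (auto intro: mono_onD)
    moreover have "g t (1 + H') \<ge> g t 1 + g (t + 1) H' - S" using Sb[OF t(1,2), of 1 H'] H'1 by auto
    moreover have "c * (a - (H' + 1)) \<le> \<bar>c\<bar> * B"
    proof -
      have "c * (a - (H' + 1)) \<le> \<bar>c\<bar> * \<bar>a - (H' + 1)\<bar>" by (metis abs_ge_self abs_mult)
      also have "\<dots> \<le> \<bar>c\<bar> * B" using a by (intro mult_left_mono) auto
      finally show ?thesis .
    qed
    moreover have "F (t'+h) = g t a - c * a" unfolding F_def a_def by simp
    moreover have "F (t+1) = g t 1 - c" unfolding F_def by simp
    ultimately have "F (t'+h) \<ge> F (t+1) + (c1 - c) * H' - S - \<bar>c\<bar> * B"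
      using p t(3) by (simp add: algebra_simps)
    then show ?thesis using big mle t' by linarith
  qed
  show ?thesis
  proof (intro exI[of _ t'] conjI allI impI)
    show "M \<le> t'" using t' D_def t p by auto
    fix h assume h: "0 < h \<and> h \<le> B"
    define a0 where "a0 = t' - t"
    have a0: "a0 \<ge> 1" using t' D_def a0_def by auto
    have "g t (a0 + h) - g (t + a0) h - g t a0 \<le> S" using Sb[OF t(1,2), of a0 h] a0 h by auto
    moreover have "t + a0 = t'" using a0_def by simp
    moreover have "F (t'+h) = g t (a0 + h) - c * (a0 + h)" "F t' = g t a0 - c * a0"
      unfolding F_def a0_def by (simp_all add: algebra_simps)
    ultimately show "c * h - (S + 1) \<le> g t' h" using Fh[of h] h by (simp add: algebra_simps)
  qed
qed

theorem proposition5p5: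
  fixes g :: "real \<Rightarrow> real \<Rightarrow> real" and t0 :: real
  assumes mono: "\<And>t. t > 0 \<Longrightarrow> mono_on {0..} (g t)"
    and bdd: "bdd_above {\<bar>g t (h + k) - g (t + h) k - g t h\<bar> | t h k. t > t0 \<and> t > 0 \<and> h > 0 \<and> k > 0}"
  defines "S \<equiv> Sup {\<bar>g t (h + k) - g (t + h) k - g t h\<bar> | t h k. t > t0 \<and> t > 0 \<and> h > 0 \<and> k > 0}"
  shows "(\<forall>tn :: nat \<Rightarrow> real. filterlim tn at_top sequentially \<longrightarrow>
            Limsup at_top (\<lambda>h. limsup (\<lambda>n. ereal (g (tn n) h / h)))
              \<le> Limsup at_top (\<lambda>h. Limsup at_top (\<lambda>t. ereal (g t h / h))))
       \<and> (\<forall>\<kappa> :: real. \<kappa> > 0 \<longrightarrow>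
            (\<exists>tb :: nat \<Rightarrow> real. filterlim tb at_top sequentially \<and>
               Limsup at_top (\<lambda>h. Limsup at_top (\<lambda>t. ereal (g t h / h)))
                 \<le> Liminf at_top (\<lambda>h. liminf (\<lambda>n. ereal (g (tb n) h / h))) + ereal (2 * S / \<kappa>)))"
proof -
  let ?A = "{\<bar>g t (h + k) - g (t + h) k - g t h\<bar> | t h k. t > t0 \<and> t > 0 \<and> h > 0 \<and> k > 0}"
  have Sb: "\<bar>g t (h + k) - g (t + h) k - g t h\<bar> \<le> S" if "t > t0" "t > 0" "h > 0" "k > 0" for t h k
    unfolding S_def using that by (intro cSup_upper[OF _ bdd]) blast
  have S0: "S \<ge> 0"
    using Sb[of "max t0 0 + 1" 1 1] by (smt (verit))
  let ?L = "Limsup at_top (\<lambda>h. Limsup at_top (\<lambda>t. ereal (g t h / h)))"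
  have P1: "Limsup at_top (\<lambda>h. limsup (\<lambda>n. ereal (g (tn n) h / h))) \<le> ?L"
    if tn: "filterlim tn at_top sequentially" for tn :: "nat \<Rightarrow> real"
  proof (rule Limsup_mono, rule always_eventually, rule allI)
    fix h
    show "limsup (\<lambda>n. ereal (g (tn n) h / h)) \<le> Limsup at_top (\<lambda>t. ereal (g t h / h))"
      unfolding Limsup_le_iff
    proof (intro allI impI)
      fix y assume "Limsup at_top (\<lambda>t. ereal (g t h / h)) < y"
      then have "eventually (\<lambda>t. ereal (g t h / h) < y) at_top"
        using Limsup_le_iff[of at_top "\<lambda>t. ereal (g t h / h)" "Limsup at_top (\<lambda>t. ereal (g t h / h))"] by blast
      then show "eventually (\<lambda>n. ereal (g (tn n) h / h) < y) sequentially"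
        using tn unfolding filterlim_iff by blast
    qed
  qed
  have P2: "\<exists>tb :: nat \<Rightarrow> real. filterlim tb at_top sequentially \<and>
               ?L \<le> Liminf at_top (\<lambda>h. liminf (\<lambda>n. ereal (g (tb n) h / h)))"
  proof (cases "?L = -\<infinity>")
    case True
    then show ?thesis by (intro exI[of _ real]) (simp add: filterlim_real_sequentially)
  next
    case False
    have "\<exists>c :: nat \<Rightarrow> real. (\<forall>n. ereal (c n) < ?L) \<and> (\<forall>z. ereal z < ?L \<longrightarrow> eventually (\<lambda>n. z < c n) sequentially)"
    proof (cases ?L)
      case (real l)
      show ?thesis
      proof (intro exI[of _ "\<lambda>n. l - 1 / (real n + 1)"] conjI allI impI)
        fix n show "ereal (l - 1 / (real n + 1)) < ?L" using real by simp
      next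
        fix z assume "ereal z < ?L"
        then have zl: "z < l" using real by simp
        obtain N :: nat where N: "N > 1 / (l - z)"
          using reals_Archimedean2 by blast
        show "eventually (\<lambda>n. z < l - 1 / (real n + 1)) sequentially"
          unfolding eventually_sequentially
        proof (intro exI[of _ N] allI impI)
          fix n assume "N \<le> n"
          then have "1 / (l - z) < real n + 1" using N by linarith
          then have "1 < (real n + 1) * (l - z)" using zl by (simp add: field_simps)
          then show "z < l - 1 / (real n + 1)" by (simp add: field_simps)
        qed
      qed
    next
      case PInf
      show ?thesis
      proof (intro exI[of _ "\<lambda>n. real n"] conjI allI impI)
        fix n show "ereal (real n) < ?L" using PInf by simp
      next
        fix z assume "ereal z < ?L"
        obtain N :: nat where N: "N > z" using reals_Archimedean2 by blast
        show "eventually (\<lambda>n. z < real n) sequentially"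
          unfolding eventually_sequentially using N
          by (intro exI[of _ N]) (auto intro: less_le_trans)
      qed
    qed (use False in auto)
    then obtain c :: "nat \<Rightarrow> real" where c: "\<And>n. ereal (c n) < ?L"
      "\<And>z. ereal z < ?L \<Longrightarrow> eventually (\<lambda>n. z < c n) sequentially" by blast
    have "\<exists>t'\<ge>real n. \<forall>h. 0 < h \<and> h \<le> real n \<longrightarrow> c n * h - (S + 1) \<le> g t' h" for n
    proof -
      obtain c1 where c1: "ereal (c n) < ereal c1" "ereal c1 < ?L" using ereal_dense2[OF c(1)] by blast
      have freq: "\<exists>h\<ge>H0. \<exists>p\<ge>M. c1 * h < g p h" for H0 M
      proof -
        obtain h where h: "h \<ge> max H0 1" "ereal c1 < Limsup at_top (\<lambda>t. ereal (g t h / h))"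
          using less_Limsup_at_top[OF c1(2)] by blast
        obtain p where p: "p \<ge> M" "ereal c1 < ereal (g p h / h)"
          using less_Limsup_at_top[OF h(2)] by blast
        have "c1 * h < g p h" using p(2) h(1) by (simp add: field_simps)
        then show ?thesis using h p by auto
      qed
      show ?thesis
        by (rule key[OF mono Sb freq]) (use c1 in auto)
    qed
    then obtain tb where tb: "\<And>n. tb n \<ge> real n"
      "\<And>n h. 0 < h \<Longrightarrow> h \<le> real n \<Longrightarrow> c n * h - (S + 1) \<le> g (tb n) h"
      by metis
    have lim: "filterlim tb at_top sequentially"
      by (rule filterlim_at_top_mono[OF filterlim_real_sequentially]) (use tb(1) in auto)
    have "?L \<le> Liminf at_top (\<lambda>h. liminf (\<lambda>n. ereal (g (tb n) h / h)))"
      unfolding le_Liminf_iff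
    proof (intro allI impI)
      fix y assume "y < ?L"
      then obtain z1 where z1: "y < ereal z1" "ereal z1 < ?L" using ereal_dense2 by blast
      then obtain z where z: "ereal z1 < ereal z" "ereal z < ?L" using ereal_dense2 by blast
      have zz: "z1 < z" using z by simp
      obtain N1 where N1: "\<And>n. n \<ge> N1 \<Longrightarrow> z < c n"
        using c(2)[OF z(2)] unfolding eventually_sequentially by blast
      show "eventually (\<lambda>h. y < liminf (\<lambda>n. ereal (g (tb n) h / h))) at_top"
        unfolding eventually_at_top_linorder
      proof (intro exI[of _ "max 1 ((S + 1) / (z - z1))"] allI impI)
        fix h :: real assume h: "max 1 ((S + 1) / (z - z1)) \<le> h"
        have "ereal z1 \<le> liminf (\<lambda>n. ereal (g (tb n) h / h))"
        proof (rule Liminf_bounded, unfold eventually_sequentially, intro exI[of _ "max N1 (nat \<lceil>h\<rceil>)"] allI impI)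
          fix n assume n: "max N1 (nat \<lceil>h\<rceil>) \<le> n"
          have hn: "h \<le> real n" using n by linarith
          have h0: "h > 0" using h by auto
          have "c n * h - (S + 1) \<le> g (tb n) h" using tb(2)[OF h0 hn] .
          then have "(c n * h - (S + 1)) / h \<le> g (tb n) h / h" using h0 by (intro divide_right_mono) auto
          moreover have "(c n * h - (S + 1)) / h = c n - (S + 1) / h" using h0 by (simp add: field_simps)
          ultimately have "c n - (S + 1) / h \<le> g (tb n) h / h" by simp
          moreover have "(S + 1) / h \<le> z - z1" using h h0 S0 zz by (simp add: field_simps)
          moreover have "z < c n" using N1 n by simp
          ultimately show "ereal z1 \<le> ereal (g (tb n) h / h)" by simp
        qed
        moreover have "y < ereal z1" using z1(1) .
        ultimately show "y < liminf (\<lambda>n. ereal (g (tb n) h / h))" by (rule order_less_le_trans[rotated])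
      qed
    qed
    then show ?thesis using lim by blast
  qed
  show ?thesis
  proof (intro conjI allI impI)
    fix tn :: "nat \<Rightarrow> real" assume "filterlim tn at_top sequentially"
    then show "Limsup at_top (\<lambda>h. limsup (\<lambda>n. ereal (g (tn n) h / h))) \<le> ?L" by (rule P1)
  next
    fix \<kappa> :: real assume k: "\<kappa> > 0"
    obtain tb :: "nat \<Rightarrow> real" where tb: "filterlim tb at_top sequentially"
      "?L \<le> Liminf at_top (\<lambda>h. liminf (\<lambda>n. ereal (g (tb n) h / h)))" using P2 by blast
    have "0 \<le> 2 * S / \<kappa>" using S0 k by simp
    then have "Liminf at_top (\<lambda>h. liminf (\<lambda>n. ereal (g (tb n) h / h))) \<le>
       Liminf at_top (\<lambda>h. liminf (\<lambda>n. ereal (g (tb n) h / h))) + ereal (2 * S / \<kappa>)"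
      by (simp add: add_increasing2)
    then show "\<exists>tb :: nat \<Rightarrow> real. filterlim tb at_top sequentially \<and>
               ?L \<le> Liminf at_top (\<lambda>h. liminf (\<lambda>n. ereal (g (tb n) h / h))) + ereal (2 * S / \<kappa>)"
      using tb by (intro exI[of _ tb]) (auto intro: order_trans)
  qed
qed

end
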